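(* Let $p>1$ and $0<a<1$. Let $r$ be a number with $0<a<a+r<1$ and set $c=b_{\mathbb{D},p}(a,a+r)$. Then \[ \{z:|z-a|<r\}\subset B_{\mathbb{D},p}(a;c). \]
   Context: $\mathbb{D}=\{z\in\mathbb{C}:|z|<1\}$. For $z_1,z_2\in\mathbb{D}$ and $p\ge1$, $b_{\mathbb{D},p}(z_1,z_2)=\sup_{z\in\partial\mathbb{D}}\frac{|z_1-z_2|}{\sqrt[p]{|z_1-z|^p+|z-z_2|^p}}$, and $B_{\mathbb{D},p}(a;c)=\{z\in\mathbb{D}: b_{\mathbb{D},p}(a,z)<c\}$. *)

theory Defs
  imports "HOL-Analysis.Analysis"
begin

text \<open>The unit disk D = ball 0 1 in the complex plane; its boundary is sphere 0 1.
  The p-th root is written as powr (1/p); the base is positive whenever z1 and z2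
  lie in the open disk and z is on the unit circle.\<close>

definition b_D :: "real \<Rightarrow> complex \<Rightarrow> complex \<Rightarrow> real" where
  "b_D p z1 z2 = (SUP z\<in>sphere (0::complex) 1.
      cmod (z1 - z2) / ((cmod (z1 - z) powr p + cmod (z - z2) powr p) powr (1 / p)))"

definition B_D :: "real \<Rightarrow> complex \<Rightarrow> real \<Rightarrow> complex set" where
  "B_D p a c = {z \<in> ball 0 1. b_D p a z < c}"

end

theory Submission
  imports Defs
begin

lemma key:
  fixes p a r :: real and z w :: complex
  assumes p: "p > 0" and a: "0 < a" and ar: "a + r < 1" and r: "0 < r"
    and z: "cmod (complex_of_real a - z) \<le> r" and w: "w \<in> sphere 0 1"
  shows "cmod (complex_of_real a - z) / ((cmod (complex_of_real a - w) powr p + cmod (w - z) powr p) powr (1 / p))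
     \<le> cmod (complex_of_real a - z) / (((1 - a) powr p + (1 - a - r) powr p) powr (1 / p))"
proof -
  have nw: "cmod w = 1" using w by simp
  have x1: "1 - a \<le> cmod (complex_of_real a - w)"
    using norm_triangle_ineq2[of w "complex_of_real a"] nw a
    by (simp add: norm_minus_commute)
  have "cmod z \<le> cmod (complex_of_real a) + cmod (z - complex_of_real a)"
    using norm_triangle_ineq[of "complex_of_real a" "z - complex_of_real a"] by simp
  hence zb: "cmod z \<le> a + r" using z a by (simp add: norm_minus_commute)
  have x2: "1 - a - r \<le> cmod (w - z)"
    using norm_triangle_ineq2[of w z] nw zb by simp
  have h1: "(1 - a) powr p \<le> cmod (complex_of_real a - w) powr p"
    by (rule powr_mono2) (use p ar r x1 in auto)
  have h2: "(1 - a - r) powr p \<le> cmod (w - z) powr p"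
    by (rule powr_mono2) (use p ar r x2 in auto)
  have G: "0 < ((1 - a) powr p + (1 - a - r) powr p) powr (1 / p)"
  proof -
    have "0 < (1 - a) powr p" using ar r by simp
    moreover have "0 \<le> (1 - a - r) powr p" by simp
    ultimately have "0 < (1 - a) powr p + (1 - a - r) powr p" by linarith
    thus ?thesis by simp
  qed
  have "((1 - a) powr p + (1 - a - r) powr p) powr (1 / p)
     \<le> (cmod (complex_of_real a - w) powr p + cmod (w - z) powr p) powr (1 / p)"
    by (rule powr_mono2) (use p h1 h2 in auto)
  moreover have "0 < (cmod (complex_of_real a - w) powr p + cmod (w - z) powr p) powr (1 / p)"
    using G calculation by linarith
  ultimately show ?thesis using G by (intro divide_left_mono) auto
qed

theorem theorem3p19:
  fixes p a r :: real
  assumes "p > 1" and "0 < a" and "a < 1" and "0 < r" and "a + r < 1"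
  shows "ball (complex_of_real a) r \<subseteq> B_D p (complex_of_real a) (b_D p (complex_of_real a) (complex_of_real (a + r)))"
proof
  fix z assume zin: "z \<in> ball (complex_of_real a) r"
  define G where "G = ((1 - a) powr p + (1 - a - r) powr p) powr (1 / p)"
  have p0: "p > 0" using assms by simp
  have Gp: "0 < G" unfolding G_def
  proof -
    have "0 < (1 - a) powr p" using assms by simp
    moreover have "0 \<le> (1 - a - r) powr p" by simp
    ultimately have "0 < (1 - a) powr p + (1 - a - r) powr p" by linarith
    thus "0 < ((1 - a) powr p + (1 - a - r) powr p) powr (1 / p)" by simp
  qed
  have dz: "cmod (complex_of_real a - z) < r" using zin by (simp add: dist_norm)
  have "cmod z \<le> cmod (complex_of_real a) + cmod (z - complex_of_real a)"
    using norm_triangle_ineq[of "complex_of_real a" "z - complex_of_real a"] by simp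
  hence "cmod z < 1" using dz assms by (simp add: norm_minus_commute)
  hence zD: "z \<in> ball 0 1" by simp
  have ne: "sphere (0::complex) 1 \<noteq> {}" by (simp add: sphere_def) (metis norm_one)
  have bz: "b_D p (complex_of_real a) z \<le> cmod (complex_of_real a - z) / G"
    unfolding b_D_def G_def
    by (rule cSUP_least[OF ne], rule key) (use p0 assms dz in auto)
  let ?f = "\<lambda>w. cmod (complex_of_real a - complex_of_real (a + r)) /
      ((cmod (complex_of_real a - w) powr p + cmod (w - complex_of_real (a + r)) powr p) powr (1 / p))"
  have bdd: "bdd_above (?f ` sphere 0 1)"
  proof (rule bdd_aboveI2, rule key)
    show "cmod (complex_of_real a - complex_of_real (a + r)) \<le> r"
      using assms by (simp del: of_real_add add: of_real_diff[symmetric])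
  qed (use p0 assms in auto)
  have one: "(1::complex) \<in> sphere 0 1" by simp
  have "?f 1 = r / G"
  proof -
    have e1: "cmod (complex_of_real a - complex_of_real (a + r)) = r" using assms by simp
    have e2: "cmod (complex_of_real a - 1) = 1 - a"
      using assms by (metis abs_of_pos diff_gt_0_iff_gt norm_minus_commute norm_of_real of_real_1 of_real_diff)
    have e3: "cmod (1 - complex_of_real (a + r)) = 1 - a - r"
    proof -
      have "cmod (1 - complex_of_real (a + r)) = cmod (complex_of_real (1 - a - r))" by (simp add: algebra_simps)
      also have "\<dots> = 1 - a - r" using assms by (simp only: norm_of_real)
      finally show ?thesis .
    qed
    show ?thesis unfolding G_def e1 e2 e3 by simp
  qed
  moreover have "?f 1 \<le> b_D p (complex_of_real a) (complex_of_real (a + r))"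
    unfolding b_D_def by (rule cSUP_upper[OF one bdd])
  ultimately have "r / G \<le> b_D p (complex_of_real a) (complex_of_real (a + r))" by simp
  moreover have "cmod (complex_of_real a - z) / G < r / G" using dz Gp by (simp add: divide_strict_right_mono)
  ultimately show "z \<in> B_D p (complex_of_real a) (b_D p (complex_of_real a) (complex_of_real (a + r)))"
    unfolding B_D_def using zD bz by auto
qed

end
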